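(* If $A$ is a coherent $\mathbb{Z}$-algebra, then the sequence $(P_i)_{i\in\mathbb{Z}}$ in the abelian category $\operatorname{coh}A$ is a coherent sequence.
   Context: $k$ is a fixed field. A $\mathbb{Z}$-algebra is an associative $k$-algebra $A=\bigoplus_{i\le j}A_{ij}$ with $A_{ii}=k$, only nonzero products $A_{jk}\otimes A_{ij}\to A_{ik}$, units acting as identity, $\dim A_{ij}<\infty$. An $A$-module is a graded right module $M=\bigoplus_iM_i$ with action $M_j\otimes A_{ij}\to M_i$. $P_j=\bigoplus_iA_{ij}$; $S_j$ is $k$ in degree $j$ and $0$ elsewhere; $\mathcal{P}$ = finite direct sums of $P_j$'s. $M$ is finitely generated if a quotient of some $P\in\mathcal{P}$; coherent if finitely generated and every kernel of a map $P\to M$, $P\in\mathcal{P}$, is finitely generated. $\operatorname{coh}A$ is the (abelian) full subcategory of coherent modules. $A$ is coherent if all $P_j$, $S_j$ are coherent. For a sequence $(E_i)$ in an abelian $k$-linear category $\mathcal{C}$ (with $\dim\operatorname{Hom}(E_i,X)<\infty$ for all $X$): it is projective if for every surjection $X\to Y$ there is $n$ such that $\operatorname{Hom}(E_i,X)\to\operatorname{Hom}(E_i,Y)$ is surjective for $i<n$; a projective sequence is coherent if for every $X\in\mathcal{C}$ and $m\in\mathbb{Z}$ there are $i_1,\dots,i_s\le m$ such that $\bigoplus_j\operatorname{Hom}(E_{i_j},X)\otimes\operatorname{Hom}(E_i,E_{i_j})\to\operatorname{Hom}(E_i,X)$ is surjective for $i\ll0$. *)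

theory Defs
  imports Main
begin

text \<open>All graded pieces (of the Z-algebra and of its modules) are realised as
k-subspaces of the ambient k-vector space of functions nat \<Rightarrow> 'k, with pointwise
operations.  Every finite-dimensional k-space embeds there.\<close>

type_synonym 'k vec = "nat \<Rightarrow> 'k"

definition vzero :: "'k::field vec" where
  "vzero = (\<lambda>_. 0)"

definition vadd :: "'k::field vec \<Rightarrow> 'k vec \<Rightarrow> 'k vec" where
  "vadd v w = (\<lambda>n. v n + w n)"

definition vscale :: "'k::field \<Rightarrow> 'k vec \<Rightarrow> 'k vec" where
  "vscale c v = (\<lambda>n. c * v n)"

definition vsum :: "('a \<Rightarrow> 'k::field vec) \<Rightarrow> 'a set \<Rightarrow> 'k vec" where
  "vsum f S = (\<lambda>n. \<Sum>x\<in>S. f x n)"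

definition is_subspace :: "'k::field vec set \<Rightarrow> bool" where
  "is_subspace S \<longleftrightarrow> vzero \<in> S \<and> (\<forall>v\<in>S. \<forall>w\<in>S. vadd v w \<in> S)
      \<and> (\<forall>c v. v \<in> S \<longrightarrow> vscale c v \<in> S)"

definition lspan :: "'k::field vec set \<Rightarrow> 'k vec set" where
  "lspan B = {vsum (\<lambda>b. vscale (c b) b) B' | c B'. finite B' \<and> B' \<subseteq> B}"

definition fin_dim :: "'k::field vec set \<Rightarrow> bool" where
  "fin_dim S \<longleftrightarrow> (\<exists>B. finite B \<and> B \<subseteq> S \<and> lspan B = S)"

definition linear_on :: "'k::field vec set \<Rightarrow> 'k vec set \<Rightarrow> ('k vec \<Rightarrow> 'k vec) \<Rightarrow> bool" where
  "linear_on S T f \<longleftrightarrow> (\<forall>v\<in>S. f v \<in> T)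
      \<and> (\<forall>v\<in>S. \<forall>w\<in>S. f (vadd v w) = vadd (f v) (f w))
      \<and> (\<forall>c. \<forall>v\<in>S. f (vscale c v) = vscale c (f v))"

definition bilinear_on :: "'k::field vec set \<Rightarrow> 'k vec set \<Rightarrow> 'k vec set
      \<Rightarrow> ('k vec \<Rightarrow> 'k vec \<Rightarrow> 'k vec) \<Rightarrow> bool" where
  "bilinear_on S T U g \<longleftrightarrow> (\<forall>v\<in>S. linear_on T U (g v)) \<and> (\<forall>w\<in>T. linear_on S U (\<lambda>v. g v w))"

text \<open>Asp A i j is the graded piece A_ij (meaningful for i \<le> j, zero otherwise);
amul A i j l a b is the product a b for a \<in> A_jl, b \<in> A_ij, lying in A_il
(the product A_jl \<otimes> A_ij \<rightarrow> A_il); aone A i is the unit e_i of A_ii.\<close>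

record 'k zalg =
  Asp :: "int \<Rightarrow> int \<Rightarrow> 'k vec set"
  amul :: "int \<Rightarrow> int \<Rightarrow> int \<Rightarrow> 'k vec \<Rightarrow> 'k vec \<Rightarrow> 'k vec"
  aone :: "int \<Rightarrow> 'k vec"

definition is_zalg :: "('k::field) zalg \<Rightarrow> bool" where
  "is_zalg A \<longleftrightarrow>
     (\<forall>i j. is_subspace (Asp A i j) \<and> fin_dim (Asp A i j))
   \<and> (\<forall>i j. j < i \<longrightarrow> Asp A i j = {vzero})
   \<and> (\<forall>i. aone A i \<noteq> vzero \<and> Asp A i i = lspan {aone A i})
   \<and> (\<forall>i j l. bilinear_on (Asp A j l) (Asp A i j) (Asp A i l) (amul A i j l))
   \<and> (\<forall>i j l p c a b. c \<in> Asp A l p \<longrightarrow> a \<in> Asp A j l \<longrightarrow> b \<in> Asp A i j \<longrightarrow>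
         amul A i l p c (amul A i j l a b) = amul A i j p (amul A j l p c a) b)
   \<and> (\<forall>i j a. a \<in> Asp A i j \<longrightarrow>
         amul A i i j a (aone A i) = a \<and> amul A i j j (aone A j) a = a)"

text \<open>Msp M i is M_i; mact M i j m a is m a for m \<in> M_j, a \<in> A_ij, lying in M_i.\<close>

record 'k zmod =
  Msp :: "int \<Rightarrow> 'k vec set"
  mact :: "int \<Rightarrow> int \<Rightarrow> 'k vec \<Rightarrow> 'k vec \<Rightarrow> 'k vec"

definition is_module :: "('k::field) zalg \<Rightarrow> 'k zmod \<Rightarrow> bool" where
  "is_module A M \<longleftrightarrow>
     (\<forall>i. is_subspace (Msp M i))
   \<and> (\<forall>i j. bilinear_on (Msp M j) (Asp A i j) (Msp M i) (mact M i j))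
   \<and> (\<forall>i m. m \<in> Msp M i \<longrightarrow> mact M i i m (aone A i) = m)
   \<and> (\<forall>i l j m a b. m \<in> Msp M j \<longrightarrow> a \<in> Asp A l j \<longrightarrow> b \<in> Asp A i l \<longrightarrow>
         mact M i l (mact M l j m a) b = mact M i j m (amul A i l j a b))"

text \<open>Module homomorphisms (degree-preserving, A-linear); extensional: zero off the
carrier, so that Hom is a genuine set of morphisms.\<close>

definition is_hom :: "('k::field) zalg \<Rightarrow> 'k zmod \<Rightarrow> 'k zmod \<Rightarrow> (int \<Rightarrow> 'k vec \<Rightarrow> 'k vec) \<Rightarrow> bool" where
  "is_hom A M N f \<longleftrightarrow>
     (\<forall>i. linear_on (Msp M i) (Msp N i) (f i))
   \<and> (\<forall>i j m a. m \<in> Msp M j \<longrightarrow> a \<in> Asp A i j \<longrightarrow> f i (mact M i j m a) = mact N i j (f j m) a)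
   \<and> (\<forall>i v. v \<notin> Msp M i \<longrightarrow> f i v = vzero)"

definition Hom :: "('k::field) zalg \<Rightarrow> 'k zmod \<Rightarrow> 'k zmod \<Rightarrow> (int \<Rightarrow> 'k vec \<Rightarrow> 'k vec) set" where
  "Hom A M N = {f. is_hom A M N f}"

definition hcomp :: "(int \<Rightarrow> 'k vec \<Rightarrow> 'k vec) \<Rightarrow> (int \<Rightarrow> 'k vec \<Rightarrow> 'k vec) \<Rightarrow> (int \<Rightarrow> 'k vec \<Rightarrow> 'k vec)" where
  "hcomp g h = (\<lambda>i v. g i (h i v))"

definition surj_hom :: "('k::field) zalg \<Rightarrow> 'k zmod \<Rightarrow> 'k zmod \<Rightarrow> (int \<Rightarrow> 'k vec \<Rightarrow> 'k vec) \<Rightarrow> bool" where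
  "surj_hom A M N f \<longleftrightarrow> is_hom A M N f \<and> (\<forall>i. f i ` Msp M i = Msp N i)"

definition Pmod :: "('k::field) zalg \<Rightarrow> int \<Rightarrow> 'k zmod" where
  "Pmod A j = \<lparr>Msp = (\<lambda>i. Asp A i j), mact = (\<lambda>i l m a. amul A i l j m a)\<rparr>"

definition e0 :: "'k::field vec" where
  "e0 = (\<lambda>n. if n = 0 then 1 else 0)"

text \<open>S_j: k in degree j, zero elsewhere; A_jj = k e_j acts via k, all else by zero.\<close>
definition Smod :: "('k::field) zalg \<Rightarrow> int \<Rightarrow> 'k zmod" where
  "Smod A j = \<lparr>Msp = (\<lambda>i. if i = j then lspan {e0} else {vzero}),
               mact = (\<lambda>i l m a. if i = j \<and> l = j
                          then vscale (THE c. a = vscale c (aone A j)) m else vzero)\<rparr>"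

text \<open>Finite direct sum of a list of modules; the components are interleaved
coordinatewise into nat \<Rightarrow> 'k.\<close>
definition intl :: "nat \<Rightarrow> (nat \<Rightarrow> 'k::field vec) \<Rightarrow> 'k vec" where
  "intl s a = (\<lambda>n. if s = 0 then 0 else a (n mod s) (n div s))"

definition comp_of :: "nat \<Rightarrow> 'k vec \<Rightarrow> nat \<Rightarrow> 'k vec" where
  "comp_of s v t = (\<lambda>q. v (q * s + t))"

definition dsum :: "('k::field) zmod list \<Rightarrow> 'k zmod" where
  "dsum Ms = \<lparr>Msp = (\<lambda>i. {intl (length Ms) a | a. \<forall>t<length Ms. a t \<in> Msp (Ms ! t) i}),
              mact = (\<lambda>i j v b. intl (length Ms)
                        (\<lambda>t. mact (Ms ! t) i j (comp_of (length Ms) v t) b))\<rparr>"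

definition Pfam :: "('k::field) zalg \<Rightarrow> int list \<Rightarrow> 'k zmod" where
  "Pfam A js = dsum (map (Pmod A) js)"

definition ker_mod :: "'k zmod \<Rightarrow> (int \<Rightarrow> 'k vec \<Rightarrow> 'k vec) \<Rightarrow> ('k::field) zmod" where
  "ker_mod P f = \<lparr>Msp = (\<lambda>i. {v \<in> Msp P i. f i v = vzero}), mact = mact P\<rparr>"

definition fin_gen :: "('k::field) zalg \<Rightarrow> 'k zmod \<Rightarrow> bool" where
  "fin_gen A M \<longleftrightarrow> is_module A M \<and> (\<exists>js f. surj_hom A (Pfam A js) M f)"

definition coherent_mod :: "('k::field) zalg \<Rightarrow> 'k zmod \<Rightarrow> bool" where
  "coherent_mod A M \<longleftrightarrow> fin_gen A M
     \<and> (\<forall>js f. is_hom A (Pfam A js) M f \<longrightarrow> fin_gen A (ker_mod (Pfam A js) f))"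

definition coherent_zalg :: "('k::field) zalg \<Rightarrow> bool" where
  "coherent_zalg A \<longleftrightarrow> is_zalg A
     \<and> (\<forall>j. coherent_mod A (Pmod A j) \<and> coherent_mod A (Smod A j))"

text \<open>Obj describes the objects of the (full) subcategory C of A-modules; here C = coh A.
Surjections in coh A are the surjective module maps.\<close>

definition projective_seq :: "('k::field) zalg \<Rightarrow> ('k zmod \<Rightarrow> bool) \<Rightarrow> (int \<Rightarrow> 'k zmod) \<Rightarrow> bool" where
  "projective_seq A Obj E \<longleftrightarrow> (\<forall>i. Obj (E i))
     \<and> (\<forall>X Y g. Obj X \<longrightarrow> Obj Y \<longrightarrow> surj_hom A X Y g \<longrightarrow>
           (\<exists>n. \<forall>i<n. (\<lambda>h. hcomp g h) ` Hom A (E i) X = Hom A (E i) Y))"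

text \<open>Image of the map \<Oplus>_t Hom(E_{i_t},X) \<otimes> Hom(E_i,E_{i_t}) \<rightarrow> Hom(E_i,X):
all finite sums of composites f \<circ> h with f \<in> Hom(E_{i_t},X), h \<in> Hom(E_i,E_{i_t}).\<close>
definition comp_image :: "('k::field) zalg \<Rightarrow> (int \<Rightarrow> 'k zmod) \<Rightarrow> int list \<Rightarrow> 'k zmod \<Rightarrow> int
     \<Rightarrow> (int \<Rightarrow> 'k vec \<Rightarrow> 'k vec) set" where
  "comp_image A E ids X i =
     {(\<lambda>d v. vsum (\<lambda>r. hcomp (f r) (h r) d v) {..<(N::nat)}) | N c f h.
        \<forall>r<N. c r < length ids \<and> f r \<in> Hom A (E (ids ! c r)) X \<and> h r \<in> Hom A (E i) (E (ids ! c r))}"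

definition coherent_seq :: "('k::field) zalg \<Rightarrow> ('k zmod \<Rightarrow> bool) \<Rightarrow> (int \<Rightarrow> 'k zmod) \<Rightarrow> bool" where
  "coherent_seq A Obj E \<longleftrightarrow> projective_seq A Obj E
     \<and> (\<forall>X m. Obj X \<longrightarrow> (\<exists>ids. (\<forall>t\<in>set ids. t \<le> m) \<and>
           (\<exists>n. \<forall>i<n. Hom A (E i) X \<subseteq> comp_image A E ids X i)))"

end

theory Submission
  imports Defs
begin


lemma vscale0[simp]: "vscale 0 v = vzero" by (simp add: vscale_def vzero_def)
lemma vscale_zero[simp]: "vscale c vzero = vzero" by (simp add: vscale_def vzero_def)
lemma vadd_zero[simp]: "vadd vzero v = v" "vadd v vzero = v" by (simp_all add: vadd_def vzero_def)

lemma sub_zero: "is_subspace S \<Longrightarrow> vzero \<in> S" by (simp add: is_subspace_def)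
lemma sub_add: "is_subspace S \<Longrightarrow> v \<in> S \<Longrightarrow> w \<in> S \<Longrightarrow> vadd v w \<in> S" by (simp add: is_subspace_def)

lemma lin_in: "linear_on S T f \<Longrightarrow> v \<in> S \<Longrightarrow> f v \<in> T" by (simp add: linear_on_def)
lemma lin_add: "linear_on S T f \<Longrightarrow> v \<in> S \<Longrightarrow> w \<in> S \<Longrightarrow> f (vadd v w) = vadd (f v) (f w)"
  by (simp add: linear_on_def)
lemma lin_scale: "linear_on S T f \<Longrightarrow> v \<in> S \<Longrightarrow> f (vscale c v) = vscale c (f v)"
  by (simp add: linear_on_def)
lemma lin_zero: "is_subspace S \<Longrightarrow> linear_on S T f \<Longrightarrow> f vzero = vzero"
  by (metis lin_scale sub_zero vscale0)

lemma lspan_single: "lspan {e} = range (\<lambda>c. vscale c e)"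
proof
  show "lspan {e} \<subseteq> range (\<lambda>c. vscale c e)"
  proof
    fix v assume "v \<in> lspan {e}"
    then obtain c B' where v: "v = vsum (\<lambda>b. vscale (c b) b) B'" and B': "B' \<subseteq> {e}"
      unfolding lspan_def by blast
    from B' have "B' = {} \<or> B' = {e}" by blast
    then show "v \<in> range (\<lambda>c. vscale c e)"
    proof
      assume "B' = {}" then have "v = vscale 0 e" using v by (simp add: vsum_def vscale_def)
      then show ?thesis by blast
    next
      assume "B' = {e}" then have "v = vscale (c e) e" using v by (simp add: vsum_def vscale_def)
      then show ?thesis by blast
    qed
  qed
next
  show "range (\<lambda>c. vscale c e) \<subseteq> lspan {e}"
  proof
    fix v assume "v \<in> range (\<lambda>c. vscale c e)"
    then obtain c where v: "v = vscale c e" by blast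
    show "v \<in> lspan {e}" unfolding lspan_def mem_Collect_eq
      apply (rule exI[of _ "\<lambda>_. c"], rule exI[of _ "{e}"]) using v by (simp add: vsum_def vscale_def)
  qed
qed

lemma scale_inj: "e \<noteq> vzero \<Longrightarrow> vscale c e = vscale c' e \<Longrightarrow> c = c'"
proof -
  assume e: "e \<noteq> vzero" and eq: "vscale c e = vscale c' e"
  then obtain n where "e n \<noteq> 0" by (auto simp: vzero_def)
  moreover have "c * e n = c' * e n" using fun_cong[OF eq, of n] by (simp add: vscale_def)
  ultimately show "c = c'" by simp
qed

context fixes A :: "('k::field) zalg" assumes ZA: "is_zalg A"
begin
lemma A_sub: "is_subspace (Asp A i j)" using ZA by (simp add: is_zalg_def)
lemma A_low: "j < i \<Longrightarrow> Asp A i j = {vzero}" using ZA by (simp add: is_zalg_def)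
lemma A_one_nz: "aone A i \<noteq> vzero" using ZA by (simp add: is_zalg_def)
lemma A_ii: "Asp A i i = lspan {aone A i}" using ZA by (simp add: is_zalg_def)
lemma A_bil: "bilinear_on (Asp A j l) (Asp A i j) (Asp A i l) (amul A i j l)"
  using ZA by (simp add: is_zalg_def)
lemma A_assoc: "c \<in> Asp A l p \<Longrightarrow> a \<in> Asp A j l \<Longrightarrow> b \<in> Asp A i j \<Longrightarrow>
         amul A i l p c (amul A i j l a b) = amul A i j p (amul A j l p c a) b"
  using ZA unfolding is_zalg_def by blast
lemma A_unit1: "a \<in> Asp A i j \<Longrightarrow> amul A i i j a (aone A i) = a"
  using ZA unfolding is_zalg_def by blast
lemma A_unit2: "a \<in> Asp A i j \<Longrightarrow> amul A i j j (aone A j) a = a"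
  using ZA unfolding is_zalg_def by blast
lemma A_in: "a \<in> Asp A j l \<Longrightarrow> b \<in> Asp A i j \<Longrightarrow> amul A i j l a b \<in> Asp A i l"
  using A_bil[of j l i] by (simp add: bilinear_on_def linear_on_def)
lemma A_lin1: "b \<in> Asp A i j \<Longrightarrow> linear_on (Asp A j l) (Asp A i l) (\<lambda>a. amul A i j l a b)"
  using A_bil[of j l i] by (simp add: bilinear_on_def)
lemma A_lin2: "a \<in> Asp A j l \<Longrightarrow> linear_on (Asp A i j) (Asp A i l) (amul A i j l a)"
  using A_bil[of j l i] by (simp add: bilinear_on_def)
lemma A_zero1: "b \<in> Asp A i j \<Longrightarrow> amul A i j l vzero b = vzero"
  using lin_zero[OF A_sub A_lin1] by blast
lemma A_zero2: "a \<in> Asp A j l \<Longrightarrow> amul A i j l a vzero = vzero"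
  using lin_zero[OF A_sub A_lin2] by blast

lemma one_in: "aone A i \<in> Asp A i i"
proof -
  have "aone A i = vscale 1 (aone A i)" by (simp add: vscale_def)
  then show ?thesis using A_ii[of i] lspan_single[of "aone A i"] by (metis rangeI)
qed

lemma Aii_form: "v \<in> Asp A i i \<Longrightarrow> \<exists>c. v = vscale c (aone A i)"
  using A_ii[of i] lspan_single[of "aone A i"] by auto

end

context fixes A :: "('k::field) zalg" and M assumes ZA: "is_zalg A" and MM: "is_module A M"
begin
lemma M_sub: "is_subspace (Msp M i)" using MM by (simp add: is_module_def)
lemma M_bil: "bilinear_on (Msp M j) (Asp A i j) (Msp M i) (mact M i j)"
  using MM by (simp add: is_module_def)
lemma M_unit: "m \<in> Msp M i \<Longrightarrow> mact M i i m (aone A i) = m"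
  using MM by (simp add: is_module_def)
lemma M_assoc: "m \<in> Msp M j \<Longrightarrow> a \<in> Asp A l j \<Longrightarrow> b \<in> Asp A i l \<Longrightarrow>
         mact M i l (mact M l j m a) b = mact M i j m (amul A i l j a b)"
  using MM unfolding is_module_def by blast
lemma M_in: "m \<in> Msp M j \<Longrightarrow> a \<in> Asp A i j \<Longrightarrow> mact M i j m a \<in> Msp M i"
  using M_bil[of j i] by (simp add: bilinear_on_def linear_on_def)
lemma M_lin1: "a \<in> Asp A i j \<Longrightarrow> linear_on (Msp M j) (Msp M i) (\<lambda>m. mact M i j m a)"
  using M_bil[of j i] by (simp add: bilinear_on_def)
lemma M_lin2: "m \<in> Msp M j \<Longrightarrow> linear_on (Asp A i j) (Msp M i) (mact M i j m)"
  using M_bil[of j i] by (simp add: bilinear_on_def)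
lemma M_zero1: "a \<in> Asp A i j \<Longrightarrow> mact M i j vzero a = vzero"
  using lin_zero[OF M_sub M_lin1] by blast
lemma M_zero2: "m \<in> Msp M j \<Longrightarrow> mact M i j m vzero = vzero"
  using lin_zero[OF A_sub[OF ZA] M_lin2] by blast
lemma M_add1: "a \<in> Asp A i j \<Longrightarrow> m \<in> Msp M j \<Longrightarrow> m' \<in> Msp M j \<Longrightarrow>
   mact M i j (vadd m m') a = vadd (mact M i j m a) (mact M i j m' a)"
  using lin_add[OF M_lin1] by blast
lemma M_add2: "m \<in> Msp M j \<Longrightarrow> a \<in> Asp A i j \<Longrightarrow> a' \<in> Asp A i j \<Longrightarrow>
   mact M i j m (vadd a a') = vadd (mact M i j m a) (mact M i j m a')"
  using lin_add[OF M_lin2] by blast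
end



lemma Pmod_Msp[simp]: "Msp (Pmod A j) = (\<lambda>i. Asp A i j)" by (simp add: Pmod_def)
lemma Pmod_mact[simp]: "mact (Pmod A j) = (\<lambda>i l m a. amul A i l j m a)" by (simp add: Pmod_def)

definition yon :: "('k::field) zalg \<Rightarrow> 'k zmod \<Rightarrow> int \<Rightarrow> 'k vec \<Rightarrow> (int \<Rightarrow> 'k vec \<Rightarrow> 'k vec)" where
  "yon A M j x = (\<lambda>d v. if v \<in> Asp A d j then mact M d j x v else vzero)"

lemma hom_lin: "is_hom A M N f \<Longrightarrow> linear_on (Msp M i) (Msp N i) (f i)" by (simp add: is_hom_def)
lemma hom_in: "is_hom A M N f \<Longrightarrow> v \<in> Msp M i \<Longrightarrow> f i v \<in> Msp N i" by (simp add: is_hom_def linear_on_def)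
lemma hom_compat: "is_hom A M N f \<Longrightarrow> m \<in> Msp M j \<Longrightarrow> a \<in> Asp A i j \<Longrightarrow> f i (mact M i j m a) = mact N i j (f j m) a"
  by (simp add: is_hom_def)
lemma hom_off: "is_hom A M N f \<Longrightarrow> v \<notin> Msp M i \<Longrightarrow> f i v = vzero" by (simp add: is_hom_def)
lemma hom_zero: "is_module A M \<Longrightarrow> is_hom A M N f \<Longrightarrow> f i vzero = vzero"
  using lin_zero[OF _ hom_lin] by (metis is_module_def)

context fixes A :: "('k::field) zalg" and M assumes ZA: "is_zalg A" and MM: "is_module A M"
begin

lemma yon_hom: "x \<in> Msp M j \<Longrightarrow> yon A M j x \<in> Hom A (Pmod A j) M"
proof -
  assume x: "x \<in> Msp M j"
  have lin: "linear_on (Asp A d j) (Msp M d) (yon A M j x d)" for d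
    using M_lin2[OF ZA MM x, of d] sub_add[OF A_sub[OF ZA]] A_sub[OF ZA]
    unfolding linear_on_def yon_def is_subspace_def by auto
  have comp: "yon A M j x d (amul A d l j m a) = mact M d l (yon A M j x l m) a"
    if m: "m \<in> Asp A l j" and a: "a \<in> Asp A d l" for d l m a
    using A_in[OF ZA m a] m M_assoc[OF ZA MM x m a] by (simp add: yon_def)
  show ?thesis unfolding Hom_def is_hom_def using lin comp by (simp add: yon_def)
qed

lemma yon_eq: "f \<in> Hom A (Pmod A j) M \<Longrightarrow> f = yon A M j (f j (aone A j))"
proof -
  assume f: "f \<in> Hom A (Pmod A j) M"
  then have h: "is_hom A (Pmod A j) M f" by (simp add: Hom_def)
  show ?thesis
  proof (rule ext, rule ext)
    fix d v
    show "f d v = yon A M j (f j (aone A j)) d v"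
    proof (cases "v \<in> Asp A d j")
      case True
      have "f d v = f d (mact (Pmod A j) d j (aone A j) v)" using A_unit2[OF ZA True] by simp
      also have "\<dots> = mact M d j (f j (aone A j)) v"
        using hom_compat[OF h, of "aone A j" j v d] one_in[OF ZA] True by simp
      finally show ?thesis using True by (simp add: yon_def)
    next
      case False then show ?thesis using hom_off[OF h, of v d] by (simp add: yon_def)
    qed
  qed
qed

lemma yon_zero: "yon A M j vzero = (\<lambda>d v. vzero)"
  by (auto simp: yon_def M_zero1[OF ZA MM] intro!: ext)

lemma yon_add: "x \<in> Msp M j \<Longrightarrow> y \<in> Msp M j \<Longrightarrow>
   yon A M j (vadd x y) = (\<lambda>d v. vadd (yon A M j x d v) (yon A M j y d v))"
  by (auto simp: yon_def M_add1[OF ZA MM] intro!: ext)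

lemma yon_comp: "y \<in> Msp M d \<Longrightarrow> c \<in> Asp A i d \<Longrightarrow>
   yon A M i (mact M i d y c) = hcomp (yon A M d y) (yon A (Pmod A d) i c)"
proof (rule ext, rule ext)
  fix k v assume y: "y \<in> Msp M d" and c: "c \<in> Asp A i d"
  show "yon A M i (mact M i d y c) k v = hcomp (yon A M d y) (yon A (Pmod A d) i c) k v"
  proof (cases "v \<in> Asp A k i")
    case True
    then show ?thesis using A_in[OF ZA c True] M_assoc[OF ZA MM y c True]
      by (simp add: yon_def hcomp_def)
  next
    case False
    then show ?thesis using M_zero2[OF ZA MM y] sub_zero[OF A_sub[OF ZA]]
      by (simp add: yon_def hcomp_def)
  qed
qed

end

lemma hcomp_hom:
  assumes ZA: "is_zalg A" and MX: "is_module A X"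
    and g: "is_hom A X Y g" and h: "is_hom A P X h"
  shows "is_hom A P Y (hcomp g h)"
proof -
  have lin: "linear_on (Msp P i) (Msp Y i) (hcomp g h i)" for i
    using hom_lin[OF g, of i] hom_lin[OF h, of i]
    unfolding linear_on_def hcomp_def by auto
  have comp: "hcomp g h i (mact P i j m a) = mact Y i j (hcomp g h j m) a"
    if "m \<in> Msp P j" "a \<in> Asp A i j" for i j m a
    using that hom_compat[OF h] hom_compat[OF g] hom_in[OF h] by (simp add: hcomp_def)
  have off: "hcomp g h i v = vzero" if "v \<notin> Msp P i" for i v
    using that hom_off[OF h] hom_zero[OF MX g] by (simp add: hcomp_def)
  show ?thesis unfolding is_hom_def using lin comp off by blast
qed

lemma lift_hom:
  assumes ZA: "is_zalg A" and MX: "is_module A X" and MY: "is_module A Y"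
    and g: "surj_hom A X Y g"
  shows "(\<lambda>h. hcomp g h) ` Hom A (Pmod A i) X = Hom A (Pmod A i) Y"
proof
  have gh: "is_hom A X Y g" using g by (simp add: surj_hom_def)
  show "(\<lambda>h. hcomp g h) ` Hom A (Pmod A i) X \<subseteq> Hom A (Pmod A i) Y"
    using hcomp_hom[OF ZA MX gh] by (auto simp: Hom_def)
  show "Hom A (Pmod A i) Y \<subseteq> (\<lambda>h. hcomp g h) ` Hom A (Pmod A i) X"
  proof
    fix psi assume psi: "psi \<in> Hom A (Pmod A i) Y"
    define y where "y = psi i (aone A i)"
    have y: "y \<in> Msp Y i" unfolding y_def using psi one_in[OF ZA] hom_in
      by (fastforce simp: Hom_def)
    then have "y \<in> g i ` Msp X i" using g by (simp add: surj_hom_def)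
    then obtain x where x: "x \<in> Msp X i" "g i x = y" by blast
    have e1: "psi = yon A Y i y" unfolding y_def using yon_eq[OF ZA MY psi] .
    have e2: "hcomp g (yon A X i x) = yon A Y i y"
    proof (rule ext, rule ext)
      fix d v show "hcomp g (yon A X i x) d v = yon A Y i y d v"
        using hom_compat[OF gh x(1)] x(2) hom_zero[OF MX gh]
        by (simp add: hcomp_def yon_def)
    qed
    show "psi \<in> (\<lambda>h. hcomp g h) ` Hom A (Pmod A i) X"
      using e1 e2 yon_hom[OF ZA MX x(1)] by (metis image_eqI)
  qed
qed


inductive_set gspan :: "('k::field) zalg \<Rightarrow> (int \<Rightarrow> int \<Rightarrow> 'k vec \<Rightarrow> 'k vec \<Rightarrow> 'k vec)
   \<Rightarrow> (int \<times> 'k vec) set \<Rightarrow> int \<Rightarrow> 'k vec set"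
  for A act G i where
  gz: "vzero \<in> gspan A act G i"
| gg: "(d,y) \<in> G \<Longrightarrow> c \<in> Asp A i d \<Longrightarrow> act i d y c \<in> gspan A act G i"
| ga: "x \<in> gspan A act G i \<Longrightarrow> x' \<in> gspan A act G i \<Longrightarrow> vadd x x' \<in> gspan A act G i"

lemma gspan_mono: assumes "G \<subseteq> G'" shows "x \<in> gspan A act G i \<Longrightarrow> x \<in> gspan A act G' i"
proof (induction x rule: gspan.induct)
  case gz show ?case by (rule gspan.gz)
next
  case (gg d y c) show ?case using gg assms by (auto intro: gspan.gg)
next
  case (ga x x') show ?case by (rule gspan.ga[OF ga(3) ga(4)])
qed

lemma gspan_filter:
  assumes "\<And>d c. c \<in> Asp A i d \<Longrightarrow> act i d vzero c = vzero"
  shows "x \<in> gspan A act G i \<Longrightarrow> x \<in> gspan A act {p\<in>G. snd p \<noteq> vzero} i"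
proof (induction x rule: gspan.induct)
  case (gg d y c)
  then show ?case
  proof (cases "y = vzero")
    case True then show ?thesis using assms gg by (simp add: gspan.gz)
  next
    case False then show ?thesis using gg by (auto intro: gspan.gg)
  qed
next
  case gz show ?case by (rule gspan.gz)
next
  case (ga x x') show ?case by (rule gspan.ga[OF ga(3) ga(4)])
qed

lemma gspan_in:
  assumes ZA: "is_zalg A" and MM: "is_module A M" and GV: "\<And>d y. (d,y) \<in> G \<Longrightarrow> y \<in> Msp M d"
  shows "x \<in> gspan A (mact M) G i \<Longrightarrow> x \<in> Msp M i"
proof (induction x rule: gspan.induct)
  case gz show ?case by (rule sub_zero[OF M_sub[OF ZA MM]])
next
  case (gg d y c) show ?case by (rule M_in[OF ZA MM GV[OF gg(1)] gg(2)])
next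
  case (ga x x') show ?case by (rule sub_add[OF M_sub[OF ZA MM] ga(3) ga(4)])
qed

lemma gspanP_in:
  assumes ZA: "is_zalg A" and GV: "\<And>d y. (d,y) \<in> G \<Longrightarrow> y \<in> Asp A d j"
  shows "x \<in> gspan A (\<lambda>i l m a. amul A i l j m a) G i \<Longrightarrow> x \<in> Asp A i j"
proof (induction x rule: gspan.induct)
  case gz show ?case by (rule sub_zero[OF A_sub[OF ZA]])
next
  case (gg d y c) show ?case by (rule A_in[OF ZA GV[OF gg(1)] gg(2)])
next
  case (ga x x') show ?case by (rule sub_add[OF A_sub[OF ZA] ga(3) ga(4)])
qed

lemma span_trans:
  assumes ZA: "is_zalg A" and MM: "is_module A M"
    and GV: "\<And>j y. (j,y) \<in> G \<Longrightarrow> y \<in> Msp M j"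
    and HV: "\<And>j d b. (d,b) \<in> H j \<Longrightarrow> b \<in> Asp A d j"
    and HS: "\<And>j y. (j,y) \<in> G \<Longrightarrow> Asp A i j \<subseteq> gspan A (\<lambda>i l m a. amul A i l j m a) (H j) i"
  shows "x \<in> gspan A (mact M) G i \<Longrightarrow>
     x \<in> gspan A (mact M) {(d, mact M d j y b) | d b j y. (j,y) \<in> G \<and> (d,b) \<in> H j} i"
proof (induction x rule: gspan.induct)
  case gz then show ?case by (rule gspan.gz)
next
  case (ga x x') show ?case by (rule gspan.ga[OF ga(3) ga(4)])
next
  case (gg j y c)
  let ?T = "{(d, mact M d j y b) | d b j y. (j,y) \<in> G \<and> (d,b) \<in> H j}"
  have y: "y \<in> Msp M j" using GV gg by blast
  have c: "c \<in> gspan A (\<lambda>i l m a. amul A i l j m a) (H j) i" using HS gg by blast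
  have HV': "\<And>d b. (d,b) \<in> H j \<Longrightarrow> b \<in> Asp A d j" using HV by blast
  show ?case using c
  proof (induction c rule: gspan.induct)
    case gz then show ?case using M_zero2[OF ZA MM y] by (simp add: gspan.gz)
  next
    case (gg d b c')
    have b: "b \<in> Asp A d j" using HV gg by blast
    have eq: "mact M i j y (amul A i d j b c') = mact M i d (mact M d j y b) c'"
      using M_assoc[OF ZA MM y b gg(2)] by simp
    have mem: "(d, mact M d j y b) \<in> ?T"
      unfolding mem_Collect_eq using gg(1) \<open>(j,y) \<in> G\<close> by (intro exI conjI) (rule refl)
    have "mact M i d (mact M d j y b) c' \<in> gspan A (mact M) ?T i" by (rule gspan.gg[OF mem gg(2)])
    then show ?case using eq by simp
  next
    case (ga c1 c2)
    have "c1 \<in> Asp A i j" "c2 \<in> Asp A i j" using gspanP_in[OF ZA HV'] ga by blast+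
    then have "mact M i j y (vadd c1 c2) = vadd (mact M i j y c1) (mact M i j y c2)"
      using M_add2[OF ZA MM y] by blast
    then show ?case using gspan.ga[OF ga(3) ga(4)] by simp
  qed
qed

lemma ci_I:
  assumes "\<forall>r<(N::nat). c r < length ids \<and> f r \<in> Hom A (E (ids ! c r)) X \<and> h r \<in> Hom A (E i) (E (ids ! c r))"
  shows "(\<lambda>d v. vsum (\<lambda>r. hcomp (f r) (h r) d v) {..<N}) \<in> comp_image A E ids X i"
  unfolding comp_image_def mem_Collect_eq
  apply (rule exI[of _ N], rule exI[of _ c], rule exI[of _ f], rule exI[of _ h])
  using assms by simp

lemma ci_zero: "(\<lambda>d v. vzero) \<in> comp_image A E ids X i"
proof -
  have eq: "(\<lambda>d v. vzero) = (\<lambda>d v. vsum (\<lambda>r. hcomp ((\<lambda>_. undefined) r) ((\<lambda>_. undefined) r) d v) {..<0::nat})"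
    by (simp add: vsum_def vzero_def)
  have mem: "(\<lambda>d v. vsum (\<lambda>r. hcomp ((\<lambda>_. undefined) r) ((\<lambda>_. undefined) r) d v) {..<0::nat}) \<in> comp_image A E ids X i"
    by (rule ci_I) simp
  show ?thesis unfolding eq by (rule mem)
qed

lemma ci_gen:
  assumes "k < length ids" "f \<in> Hom A (E (ids ! k)) X" "h \<in> Hom A (E i) (E (ids ! k))"
  shows "hcomp f h \<in> comp_image A E ids X i"
proof -
  have "hcomp f h = (\<lambda>d v. vsum (\<lambda>r. hcomp ((\<lambda>_. f) r) ((\<lambda>_. h) r) d v) {..<1::nat})"
    by (simp add: vsum_def)
  then show ?thesis using ci_I[of 1 "\<lambda>_. k" ids "\<lambda>_. f" A E X "\<lambda>_. h" i] assms by simp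
qed

lemma sum_split_add: "sum g {..<(a::nat)+b} = sum g {..<a} + sum (\<lambda>r. g (a + r)) {..<b}"
  by (induction b) (simp_all add: add.assoc)

lemma ci_add:
  assumes "F1 \<in> comp_image A E ids X i" "F2 \<in> comp_image A E ids X i"
  shows "(\<lambda>d v. vadd (F1 d v) (F2 d v)) \<in> comp_image A E ids X i"
proof -
  obtain N1 c1 f1 h1 where F1: "F1 = (\<lambda>d v. vsum (\<lambda>r. hcomp (f1 r) (h1 r) d v) {..<(N1::nat)})"
    and P1: "\<forall>r<N1. c1 r < length ids \<and> f1 r \<in> Hom A (E (ids ! c1 r)) X \<and> h1 r \<in> Hom A (E i) (E (ids ! c1 r))"
    using assms(1) unfolding comp_image_def by blast
  obtain N2 c2 f2 h2 where F2: "F2 = (\<lambda>d v. vsum (\<lambda>r. hcomp (f2 r) (h2 r) d v) {..<(N2::nat)})"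
    and P2: "\<forall>r<N2. c2 r < length ids \<and> f2 r \<in> Hom A (E (ids ! c2 r)) X \<and> h2 r \<in> Hom A (E i) (E (ids ! c2 r))"
    using assms(2) unfolding comp_image_def by blast
  define c where "c r = (if r < N1 then c1 r else c2 (r - N1))" for r
  define f where "f r = (if r < N1 then f1 r else f2 (r - N1))" for r
  define h where "h r = (if r < N1 then h1 r else h2 (r - N1))" for r
  have P: "\<forall>r<N1+N2. c r < length ids \<and> f r \<in> Hom A (E (ids ! c r)) X \<and> h r \<in> Hom A (E i) (E (ids ! c r))"
  proof (intro allI impI)
    fix r assume r: "r < N1 + N2"
    show "c r < length ids \<and> f r \<in> Hom A (E (ids ! c r)) X \<and> h r \<in> Hom A (E i) (E (ids ! c r))"
    proof (cases "r < N1")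
      case True
      have e: "c r = c1 r" "f r = f1 r" "h r = h1 r" using True by (simp_all add: c_def f_def h_def)
      show ?thesis unfolding e by (rule P1[rule_format, OF True])
    next
      case False then have r2: "r - N1 < N2" using r by simp
      have e: "c r = c2 (r - N1)" "f r = f2 (r - N1)" "h r = h2 (r - N1)" using False by (simp_all add: c_def f_def h_def)
      show ?thesis unfolding e by (rule P2[rule_format, OF r2])
    qed
  qed
  have eq: "(\<lambda>d v. vadd (F1 d v) (F2 d v)) = (\<lambda>d v. vsum (\<lambda>r. hcomp (f r) (h r) d v) {..<N1+N2})"
  proof (rule ext, rule ext, rule ext)
    fix d v n
    have "(\<Sum>r<N1+N2. hcomp (f r) (h r) d v n) =
          (\<Sum>r<N1. hcomp (f r) (h r) d v n) + (\<Sum>r<N2. hcomp (f (N1+r)) (h (N1+r)) d v n)"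
      by (rule sum_split_add)
    also have "(\<Sum>r<N1. hcomp (f r) (h r) d v n) = (\<Sum>r<N1. hcomp (f1 r) (h1 r) d v n)"
      by (rule sum.cong) (simp_all add: f_def h_def)
    also have "(\<Sum>r<N2. hcomp (f (N1+r)) (h (N1+r)) d v n) = (\<Sum>r<N2. hcomp (f2 r) (h2 r) d v n)"
      by (rule sum.cong) (simp_all add: f_def h_def)
    finally show "vadd (F1 d v) (F2 d v) n = vsum (\<lambda>r. hcomp (f r) (h r) d v) {..<N1+N2} n"
      by (simp add: F1 F2 vadd_def vsum_def)
  qed
  show ?thesis unfolding eq by (rule ci_I[OF P])
qed

lemma yon_ci:
  assumes ZA: "is_zalg A" and MM: "is_module A M"
    and GV: "\<And>d y. (d,y) \<in> set L \<Longrightarrow> y \<in> Msp M d"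
    and PM: "\<And>j. is_module A (Pmod A j)"
  shows "x \<in> gspan A (mact M) (set L) i \<Longrightarrow> yon A M i x \<in> comp_image A (Pmod A) (map fst L) M i"
proof (induction x rule: gspan.induct)
  case gz show ?case unfolding yon_zero[OF ZA MM] by (rule ci_zero)
next
  case (ga x x')
  have x: "x \<in> Msp M i" "x' \<in> Msp M i" using gspan_in[OF ZA MM GV] ga(1,2) by blast+
  show ?case unfolding yon_add[OF ZA MM x] by (rule ci_add[OF ga(3) ga(4)])
next
  case (gg d y c)
  obtain k where k: "k < length L" "L ! k = (d,y)" using gg(1) unfolding in_set_conv_nth by blast
  have kk: "k < length (map fst L)" "map fst L ! k = d" using k by simp_all
  have y: "y \<in> Msp M d" using GV gg by blast
  have h1: "yon A M d y \<in> Hom A (Pmod A d) M" by (rule yon_hom[OF ZA MM y])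
  have h2: "yon A (Pmod A d) i c \<in> Hom A (Pmod A i) (Pmod A d)"
    using yon_hom[OF ZA PM, of c d i] gg(2) by simp
  have "hcomp (yon A M d y) (yon A (Pmod A d) i c) \<in> comp_image A (Pmod A) (map fst L) M i"
    by (rule ci_gen[OF kk(1)]) (simp_all add: kk(2) h1 h2)
  then show ?case unfolding yon_comp[OF ZA MM y gg(2)] .
qed



lemma lin_zero': "linear_on S T f \<Longrightarrow> vzero \<in> S \<Longrightarrow> f vzero = vzero"
  by (metis lin_scale vscale0)

lemma intl_cong: "(\<And>t. t < s \<Longrightarrow> a t = b t) \<Longrightarrow> intl s a = intl s b"
proof (rule ext)
  fix n assume H: "\<And>t. t < s \<Longrightarrow> a t = b t"
  show "intl s a n = intl s b n"
  proof (cases "s = 0")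
    case True then show ?thesis by (simp add: intl_def)
  next
    case False then have "n mod s < s" by simp
    then show ?thesis using H False by (simp add: intl_def)
  qed
qed

lemma comp_of_intl: "t < s \<Longrightarrow> comp_of s (intl s u) t = u t"
proof (rule ext)
  fix q assume t: "t < s"
  then have s: "s \<noteq> 0" by simp
  have "(q * s + t) mod s = t" using t by simp
  moreover have "(q * s + t) div s = q" using t by simp
  ultimately show "comp_of s (intl s u) t q = u t q" using s by (simp add: comp_of_def intl_def)
qed

lemma intl_vadd: "intl s (\<lambda>t. vadd (a t) (b t)) = vadd (intl s a) (intl s b)"
  by (rule ext) (simp add: intl_def vadd_def)

lemma intl_zero: "intl s (\<lambda>t. vzero) = vzero"
  by (rule ext) (simp add: intl_def vzero_def)

lemma intl1: "intl 1 a = a 0" "intl (Suc 0) a = a 0" by (rule ext, simp add: intl_def)+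
lemma comp_of1: "comp_of 1 v 0 = v" "comp_of (Suc 0) v 0 = v" by (rule ext, simp add: comp_of_def)+

lemma Pfam_Msp: "Msp (Pfam A js) i = {intl (length js) a | a. \<forall>t<length js. a t \<in> Asp A i (js!t)}"
  by (simp add: Pfam_def dsum_def)

lemma Pfam_memI: "(\<And>t. t < length js \<Longrightarrow> a t \<in> Asp A i (js!t)) \<Longrightarrow> intl (length js) a \<in> Msp (Pfam A js) i"
  unfolding Pfam_Msp by blast

lemma Pfam_mact: "mact (Pfam A js) i l v b = intl (length js) (\<lambda>t. amul A i l (js!t) (comp_of (length js) v t) b)"
  unfolding Pfam_def dsum_def by (simp, rule intl_cong, simp)

lemma Pfam_single: "Pfam A [j] = Pmod A j"
proof -
  have m: "{a 0 | a. a 0 \<in> Asp A i j} = Asp A i j" for i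
  proof
    show "{a 0 | a. a 0 \<in> Asp A i j} \<subseteq> Asp A i j" by auto
    show "Asp A i j \<subseteq> {a 0 | a. a 0 \<in> Asp A i j}"
    proof
      fix v assume "v \<in> Asp A i j"
      then show "v \<in> {a 0 | a. a 0 \<in> Asp A i j}"
        unfolding mem_Collect_eq by (intro exI[of _ "\<lambda>_. v"]) simp
    qed
  qed
  show ?thesis
    by (simp add: Pfam_def dsum_def Pmod_def m intl1 comp_of1)
qed

definition unitv :: "('k::field) zalg \<Rightarrow> int list \<Rightarrow> nat \<Rightarrow> 'k vec" where
  "unitv A js t = intl (length js) (\<lambda>t'. if t' = t then aone A (js!t) else vzero)"

context fixes A :: "('k::field) zalg" assumes ZA: "is_zalg A"
begin

lemma unitv_in: "t < length js \<Longrightarrow> unitv A js t \<in> Msp (Pfam A js) (js!t)"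
  unfolding unitv_def
  by (rule Pfam_memI) (auto simp: one_in[OF ZA] sub_zero[OF A_sub[OF ZA]])

lemma mact_unitv:
  assumes t0: "t0 < length js" and b: "b \<in> Asp A i (js!t0)"
  shows "mact (Pfam A js) i (js!t0) (unitv A js t0) b = intl (length js) (\<lambda>t. if t = t0 then b else vzero)"
  unfolding Pfam_mact unitv_def
proof (rule intl_cong)
  fix t assume t: "t < length js"
  have c: "comp_of (length js) (intl (length js) (\<lambda>t'. if t' = t0 then aone A (js ! t0) else vzero)) t
     = (if t = t0 then aone A (js ! t0) else vzero)" by (rule comp_of_intl[OF t])
  show "amul A i (js ! t0) (js ! t) (comp_of (length js) (intl (length js) (\<lambda>t'. if t' = t0 then aone A (js ! t0) else vzero)) t) b =
         (if t = t0 then b else vzero)"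
  proof (cases "t = t0")
    case True then show ?thesis using c A_unit2[OF ZA b] by simp
  next
    case False then show ?thesis using c A_zero1[OF ZA b] by simp
  qed
qed

lemma GEN:
  assumes MM: "is_module A M" and g: "surj_hom A (Pfam A js) M g" and x: "x \<in> Msp M i"
  shows "x \<in> gspan A (mact M) ((\<lambda>t. (js!t, g (js!t) (unitv A js t))) ` {..<length js}) i"
proof -
  let ?s = "length js"
  let ?G = "(\<lambda>t. (js!t, g (js!t) (unitv A js t))) ` {..<length js}"
  have gh: "is_hom A (Pfam A js) M g" using g by (simp add: surj_hom_def)
  have "x \<in> g i ` Msp (Pfam A js) i" using g x by (simp add: surj_hom_def)
  then obtain v where v: "v \<in> Msp (Pfam A js) i" "x = g i v" by blast
  then obtain a where a: "v = intl ?s a" "\<And>t. t < ?s \<Longrightarrow> a t \<in> Asp A i (js!t)"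
    unfolding Pfam_Msp by blast
  define w where "w T = intl ?s (\<lambda>t. if t \<in> T then a t else vzero)" for T
  have wmem: "w T \<in> Msp (Pfam A js) i" for T
    unfolding w_def by (rule Pfam_memI) (auto simp: a(2) sub_zero[OF A_sub[OF ZA]])
  have "finite T \<Longrightarrow> T \<subseteq> {..<?s} \<Longrightarrow> g i (w T) \<in> gspan A (mact M) ?G i" for T
  proof (induction T rule: finite_induct)
    case empty
    have "w {} = vzero" unfolding w_def by (simp add: intl_zero)
    moreover have "g i vzero = vzero"
      using lin_zero'[OF hom_lin[OF gh]] wmem[of "{}"] calculation by simp
    ultimately show ?case by (simp add: gspan.gz)
  next
    case (insert t0 T)
    have t0: "t0 < ?s" using insert by auto
    define u where "u = intl ?s (\<lambda>t. if t = t0 then a t0 else vzero)"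
    have umem: "u \<in> Msp (Pfam A js) i"
      unfolding u_def by (rule Pfam_memI) (auto simp: a(2) t0 sub_zero[OF A_sub[OF ZA]])
    have wi: "w (insert t0 T) = vadd (w T) u"
      unfolding w_def u_def intl_vadd[symmetric] by (rule intl_cong) (use insert in auto)
    have u2: "u = mact (Pfam A js) i (js!t0) (unitv A js t0) (a t0)"
      unfolding u_def using mact_unitv[OF t0 a(2)[OF t0]] by simp
    have gu: "g i u = mact M i (js!t0) (g (js!t0) (unitv A js t0)) (a t0)"
      unfolding u2 by (rule hom_compat[OF gh unitv_in[OF t0] a(2)[OF t0]])
    have G1: "g i u \<in> gspan A (mact M) ?G i"
      unfolding gu by (rule gspan.gg) (use t0 a(2)[OF t0] in auto)
    have G2: "g i (w T) \<in> gspan A (mact M) ?G i" using insert by auto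
    have "vadd (g i (w T)) (g i u) \<in> gspan A (mact M) ?G i" by (rule gspan.ga[OF G2 G1])
    then show ?case unfolding wi using lin_add[OF hom_lin[OF gh] wmem umem] by simp
  qed
  then have "g i (w {..<?s}) \<in> gspan A (mact M) ?G i" by simp
  moreover have "w {..<?s} = v" unfolding w_def a(1) by (rule intl_cong) simp
  ultimately show ?thesis using v by simp
qed

lemma GEN_valid: "surj_hom A (Pfam A js) M g \<Longrightarrow> (d,y) \<in> (\<lambda>t. (js!t, g (js!t) (unitv A js t))) ` {..<length js}
   \<Longrightarrow> y \<in> Msp M d"
  using unitv_in hom_in by (fastforce simp: surj_hom_def)

end


definition aug :: "('k::field) zalg \<Rightarrow> int \<Rightarrow> int \<Rightarrow> 'k vec \<Rightarrow> 'k vec" where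
  "aug A j = (\<lambda>d v. if d = j \<and> v \<in> Asp A j j then vscale (THE c. v = vscale c (aone A j)) e0 else vzero)"

lemma vadd_scale: "vadd (vscale c e) (vscale c' e) = vscale (c + c') e"
  by (rule ext) (simp add: vadd_def vscale_def distrib_right)
lemma scale_scale: "vscale c (vscale c' e) = vscale (c * c') e"
  by (rule ext) (simp add: vscale_def)

context fixes A :: "('k::field) zalg" assumes ZA: "is_zalg A"
begin

lemma coef_eq: "(THE c. vscale c' (aone A j) = vscale c (aone A j)) = c'"
  by (rule the_equality) (auto dest: scale_inj[OF A_one_nz[OF ZA]])

lemma scale_in: "vscale c (aone A j) \<in> Asp A j j"
  using A_ii[OF ZA, of j] lspan_single[of "aone A j"] by auto

lemma aug_scale: "aug A j j (vscale c (aone A j)) = vscale c e0"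
  using scale_in coef_eq by (simp add: aug_def)

lemma aug_zero: "aug A j d vzero = vzero"
proof -
  have "(THE c. vzero = vscale c (aone A j)) = 0" using coef_eq[of 0 j] by simp
  then show ?thesis by (simp add: aug_def)
qed

lemma e0_in: "vscale c e0 \<in> lspan {e0}" using lspan_single[of e0] by auto

lemma aug_hom: "is_hom A (Pmod A j) (Smod A j) (aug A j)"
proof -
  have lin: "linear_on (Asp A i j) (Msp (Smod A j) i) (aug A j i)" for i
  proof (cases "i = j")
    case True
    have "linear_on (Asp A j j) (lspan {e0}) (aug A j j)"
      unfolding linear_on_def
    proof (intro conjI ballI allI)
      fix v assume "v \<in> Asp A j j"
      then obtain c where "v = vscale c (aone A j)" using Aii_form[OF ZA] by blast
      then show "aug A j j v \<in> lspan {e0}" using aug_scale e0_in by simp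
    next
      fix v w assume "v \<in> Asp A j j" "w \<in> Asp A j j"
      then obtain c c' where "v = vscale c (aone A j)" "w = vscale c' (aone A j)"
        using Aii_form[OF ZA] by metis
      then show "aug A j j (vadd v w) = vadd (aug A j j v) (aug A j j w)"
        by (simp add: vadd_scale aug_scale)
    next
      fix c v assume "v \<in> Asp A j j"
      then obtain c' where "v = vscale c' (aone A j)" using Aii_form[OF ZA] by blast
      then show "aug A j j (vscale c v) = vscale c (aug A j j v)"
        by (simp add: scale_scale aug_scale)
    qed
    then show ?thesis using True by (simp add: Smod_def)
  next
    case False
    then show ?thesis by (simp add: Smod_def linear_on_def aug_def)
  qed
  have comp: "aug A j d (amul A d l j m a) = mact (Smod A j) d l (aug A j l m) a"
    if m: "m \<in> Asp A l j" and a: "a \<in> Asp A d l" for d l m a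
  proof (cases "d = j")
    case False then show ?thesis by (simp add: aug_def Smod_def)
  next
    case dj: True
    show ?thesis
    proof (cases "l = j")
      case True
      obtain c where c: "m = vscale c (aone A j)" using Aii_form[OF ZA] m True by blast
      obtain c' where c': "a = vscale c' (aone A j)" using Aii_form[OF ZA] a True dj by blast
      have e: "aone A j \<in> Asp A j j" by (rule one_in[OF ZA])
      have a': "a \<in> Asp A j j" using a True dj by simp
      have "amul A j j j m a = vscale c (amul A j j j (aone A j) a)"
        unfolding c by (rule lin_scale[OF A_lin1[OF ZA a'] e])
      also have "amul A j j j (aone A j) a = a" using A_unit2[OF ZA] a True dj by simp
      finally have "amul A j j j m a = vscale (c * c') (aone A j)" using c' scale_scale by simp
      then show ?thesis using dj True c c' by (simp add: aug_scale Smod_def coef_eq scale_scale mult.commute)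
    next
      case False
      have "amul A d l j m a = vzero"
      proof (cases "l < j")
        case True then have "a = vzero" using A_low[OF ZA, of l d] a dj by auto
        then show ?thesis using A_zero2[OF ZA m] by simp
      next
        case False2: False
        then have "j < l" using False by simp
        then have "m = vzero" using A_low[OF ZA, of j l] m by auto
        then show ?thesis using A_zero1[OF ZA a] by simp
      qed
      then show ?thesis using False by (simp add: aug_zero Smod_def)
    qed
  qed
  have off: "aug A j i v = vzero" if "v \<notin> Asp A i j" for i v
    using that by (auto simp: aug_def)
  show ?thesis unfolding is_hom_def using lin comp off by simp
qed

lemma ker_nonzero:
  assumes "y \<in> Msp (ker_mod (Pmod A j) (aug A j)) d" "y \<noteq> vzero"
  shows "d < j"
proof -
  have y: "y \<in> Asp A d j" "aug A j d y = vzero" using assms(1) by (simp_all add: ker_mod_def)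
  show ?thesis
  proof (rule ccontr)
    assume "\<not> d < j"
    then have "d = j \<or> j < d" by auto
    then show False
    proof
      assume "j < d" then show False using A_low[OF ZA, of j d] y assms(2) by auto
    next
      assume dj: "d = j"
      then obtain c where c: "y = vscale c (aone A j)" using Aii_form[OF ZA] y by blast
      then have "vscale c e0 = vzero" using y dj aug_scale by simp
      then have "vscale c e0 0 = vzero 0" by simp
      then have "c = 0" by (simp add: vscale_def e0_def vzero_def)
      then show False using c assms(2) by simp
    qed
  qed
qed

lemma CL:
  assumes CA: "coherent_zalg A"
  shows "\<exists>H. finite H \<and> (\<forall>(d,b)\<in>H. d < j \<and> b \<in> Asp A d j) \<and>
     (\<forall>i<j. Asp A i j \<subseteq> gspan A (\<lambda>i l m a. amul A i l j m a) H i)"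
proof -
  let ?K = "ker_mod (Pmod A j) (aug A j)"
  have "coherent_mod A (Smod A j)" using CA by (simp add: coherent_zalg_def)
  then have "fin_gen A (ker_mod (Pfam A [j]) (aug A j))"
    unfolding coherent_mod_def using aug_hom Pfam_single by metis
  then have FG: "fin_gen A ?K" by (simp add: Pfam_single)
  then have MK: "is_module A ?K" by (simp add: fin_gen_def)
  obtain js g where g: "surj_hom A (Pfam A js) ?K g" using FG by (auto simp: fin_gen_def)
  define G0 where "G0 = (\<lambda>t. (js!t, g (js!t) (unitv A js t))) ` {..<length js}"
  define H where "H = {p\<in>G0. snd p \<noteq> vzero}"
  have fin: "finite H" unfolding H_def G0_def by simp
  have val: "\<forall>(d,b)\<in>H. d < j \<and> b \<in> Asp A d j"
  proof (clarify)
    fix d b assume "(d,b) \<in> H"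
    then have db: "(d,b) \<in> G0" "b \<noteq> vzero" by (auto simp: H_def)
    then have "b \<in> Msp ?K d" using GEN_valid[OF ZA g] unfolding G0_def by blast
    then show "d < j \<and> b \<in> Asp A d j" using ker_nonzero db(2) by (auto simp: ker_mod_def)
  qed
  have span: "Asp A i j \<subseteq> gspan A (\<lambda>i l m a. amul A i l j m a) H i" if i: "i < j" for i
  proof
    fix a assume a: "a \<in> Asp A i j"
    have "a \<in> Msp ?K i" using a i by (simp add: ker_mod_def aug_def)
    then have "a \<in> gspan A (mact ?K) G0 i" unfolding G0_def by (rule GEN[OF ZA MK g])
    then have "a \<in> gspan A (\<lambda>i l m a. amul A i l j m a) G0 i" by (simp add: ker_mod_def)
    then show "a \<in> gspan A (\<lambda>i l m a. amul A i l j m a) H i"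
      unfolding H_def by (rule gspan_filter[rotated]) (simp add: A_zero1[OF ZA])
  qed
  show ?thesis using fin val span by blast
qed

end


context fixes A :: "('k::field) zalg" assumes ZA: "is_zalg A"
begin

lemma KL_base:
  assumes "j \<le> m"
  shows "\<exists>H n. finite H \<and> (\<forall>(d,b)\<in>H. d \<le> m \<and> b \<in> Asp A d j) \<and>
     (\<forall>i<n. Asp A i j \<subseteq> gspan A (\<lambda>i l m a. amul A i l j m a) H i)"
proof (intro exI conjI)
  show "finite {(j, aone A j)}" by simp
  show "\<forall>(d,b)\<in>{(j, aone A j)}. d \<le> m \<and> b \<in> Asp A d j" using assms one_in[OF ZA] by simp
  show "\<forall>i<0. Asp A i j \<subseteq> gspan A (\<lambda>i l m a. amul A i l j m a) {(j, aone A j)} i"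
  proof (intro allI impI subsetI)
    fix i a assume a: "a \<in> Asp A i j"
    have "amul A i j j (aone A j) a \<in> gspan A (\<lambda>i l m a. amul A i l j m a) {(j, aone A j)} i"
      using gspan.gg[of j "aone A j" "{(j, aone A j)}" a A i "\<lambda>i l m a. amul A i l j m a"] a by simp
    then show "a \<in> gspan A (\<lambda>i l m a. amul A i l j m a) {(j, aone A j)} i"
      using A_unit2[OF ZA a] by simp
  qed
qed

lemma self_span: "Asp A i d \<subseteq> gspan A (\<lambda>i l m a. amul A i l d m a) {(d, aone A d)} i"
proof
  fix a assume a: "a \<in> Asp A i d"
  have "amul A i d d (aone A d) a \<in> gspan A (\<lambda>i l m a. amul A i l d m a) {(d, aone A d)} i"
    using gspan.gg[of d "aone A d" "{(d, aone A d)}" a A i "\<lambda>i l m a. amul A i l d m a"] a by simp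
  then show "a \<in> gspan A (\<lambda>i l m a. amul A i l d m a) {(d, aone A d)} i"
    using A_unit2[OF ZA a] by simp
qed

lemma fin_T: "finite G \<Longrightarrow> (\<And>j. finite (H j)) \<Longrightarrow>
  finite {(d, F d j y b) | d b j y. (j,y) \<in> G \<and> (d,b) \<in> H j}"
proof -
  assume G: "finite G" and H: "\<And>j. finite (H j)"
  have "{(d, F d j y b) | d b j y. (j,y) \<in> G \<and> (d,b) \<in> H j}
      \<subseteq> (\<lambda>(p,q). (fst q, F (fst q) (fst p) (snd p) (snd q))) ` (SIGMA p:G. H (fst p))"
    by force
  moreover have "finite (SIGMA p:G. H (fst p))" using G H by auto
  ultimately show ?thesis by (meson finite_imageI finite_subset)
qed

lemma KL_step:
  assumes CA: "coherent_zalg A"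
  shows "\<exists>H n. finite H \<and> (\<forall>(d,b)\<in>H. d \<le> j - int k \<and> b \<in> Asp A d j) \<and>
     (\<forall>i<n. Asp A i j \<subseteq> gspan A (\<lambda>i l m a. amul A i l j m a) H i)"
proof (induction k)
  case 0 then show ?case using KL_base[of j j] by simp
next
  case (Suc k)
  define m where "m = j - int k - 1"
  obtain H n where H: "finite H" "\<forall>(d,b)\<in>H. d \<le> m + 1 \<and> b \<in> Asp A d j"
     "\<forall>i<n. Asp A i j \<subseteq> gspan A (\<lambda>i l m a. amul A i l j m a) H i"
    using Suc.IH unfolding m_def by auto
  obtain H' where H': "finite H'" "\<forall>(d,b)\<in>H'. d < m + 1 \<and> b \<in> Asp A d (m+1)"
     "\<forall>i<m+1. Asp A i (m+1) \<subseteq> gspan A (\<lambda>i l ma a. amul A i l (m+1) ma a) H' i"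
    using CL[OF ZA CA, of "m+1"] by blast
  define Hd where "Hd d = (if d \<le> m then {(d, aone A d)} else if d = m + 1 then H' else {})" for d
  define T where "T = {(d', mact (Pmod A j) d' d b b') | d' b' d b. (d,b) \<in> H \<and> (d',b') \<in> Hd d}"
  have PM: "is_module A (Pmod A j)" using CA by (simp add: coherent_zalg_def coherent_mod_def fin_gen_def)
  have finT: "finite T" unfolding T_def by (rule fin_T[OF H(1)]) (simp add: Hd_def H'(1))
  have valT: "\<forall>(d,b)\<in>T. d \<le> j - int (Suc k) \<and> b \<in> Asp A d j"
  proof (clarify)
    fix d' b'' assume "(d', b'') \<in> T"
    then obtain b' d b where e: "b'' = amul A d' d j b b'" and db: "(d,b) \<in> H" and db': "(d',b') \<in> Hd d"
      unfolding T_def by auto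
    have b: "b \<in> Asp A d j" "d \<le> m + 1" using H(2) db by auto
    have "d' \<le> m \<and> b' \<in> Asp A d' d"
    proof (cases "d \<le> m")
      case True then show ?thesis using db' one_in[OF ZA] by (simp add: Hd_def)
    next
      case False then have "d = m + 1" using b by simp
      then show ?thesis using db' H'(2) False by (auto simp: Hd_def)
    qed
    then show "d' \<le> j - int (Suc k) \<and> b'' \<in> Asp A d' j"
      using A_in[OF ZA b(1)] e unfolding m_def by auto
  qed
  have spT: "\<forall>i<min n (m+1). Asp A i j \<subseteq> gspan A (\<lambda>i l m a. amul A i l j m a) T i"
  proof (intro allI impI subsetI)
    fix i x assume i: "i < min n (m+1)" and x: "x \<in> Asp A i j"
    have x1: "x \<in> gspan A (mact (Pmod A j)) H i" using H(3) i x by auto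
    have GV: "\<And>d y. (d,y) \<in> H \<Longrightarrow> y \<in> Msp (Pmod A j) d" using H(2) by auto
    have HV: "\<And>d' d b. (d,b) \<in> Hd d' \<Longrightarrow> b \<in> Asp A d d'"
      using H'(2) one_in[OF ZA] by (auto simp: Hd_def split: if_splits)
    have HS: "\<And>d y. (d,y) \<in> H \<Longrightarrow> Asp A i d \<subseteq> gspan A (\<lambda>i l m a. amul A i l d m a) (Hd d) i"
    proof -
      fix d y assume "(d,y) \<in> H"
      then have dm: "d \<le> m + 1" using H(2) by auto
      show "Asp A i d \<subseteq> gspan A (\<lambda>i l m a. amul A i l d m a) (Hd d) i"
      proof (cases "d \<le> m")
        case True then show ?thesis using self_span by (simp add: Hd_def)
      next
        case False then have "d = m + 1" using dm by simp
        then show ?thesis using H'(3) i False by (auto simp: Hd_def)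
      qed
    qed
    have "x \<in> gspan A (mact (Pmod A j)) T i"
      unfolding T_def by (rule span_trans[OF ZA PM GV HV HS x1])
    then show "x \<in> gspan A (\<lambda>i l m a. amul A i l j m a) T i" by simp
  qed
  show ?case using finT valT spT by blast
qed

lemma KL:
  assumes CA: "coherent_zalg A"
  shows "\<exists>H n. finite H \<and> (\<forall>(d,b)\<in>H. d \<le> m \<and> b \<in> Asp A d j) \<and>
     (\<forall>i<n. Asp A i j \<subseteq> gspan A (\<lambda>i l m a. amul A i l j m a) H i)"
proof (cases "j \<le> m")
  case True then show ?thesis by (rule KL_base)
next
  case False
  then have e: "j - int (nat (j - m)) = m" by simp
  show ?thesis using KL_step[OF CA, of j "nat (j - m)"] unfolding e .
qed

end


theorem corollary2p5:
  fixes A :: "('k::field) zalg"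
  assumes "coherent_zalg A"
  shows "coherent_seq A (coherent_mod A) (Pmod A)"
proof -
  have ZA: "is_zalg A" using assms by (simp add: coherent_zalg_def)
  have PC: "\<And>i. coherent_mod A (Pmod A i)" using assms by (simp add: coherent_zalg_def)
  have cm_mod: "\<And>X. coherent_mod A X \<Longrightarrow> is_module A X" by (simp add: coherent_mod_def fin_gen_def)
  have PM: "\<And>j. is_module A (Pmod A j)" using PC cm_mod by blast
  have proj: "projective_seq A (coherent_mod A) (Pmod A)"
    unfolding projective_seq_def
  proof (intro conjI allI impI)
    show "coherent_mod A (Pmod A i)" for i by (rule PC)
  next
    fix X Y g assume X: "coherent_mod A X" and Y: "coherent_mod A Y" and g: "surj_hom A X Y g"
    show "\<exists>n. \<forall>i<n. (\<lambda>h. hcomp g h) ` Hom A (Pmod A i) X = Hom A (Pmod A i) Y"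
      using lift_hom[OF ZA cm_mod[OF X] cm_mod[OF Y] g] by blast
  qed
  have coh: "\<forall>X m. coherent_mod A X \<longrightarrow> (\<exists>ids. (\<forall>t\<in>set ids. t \<le> m) \<and>
           (\<exists>n. \<forall>i<n. Hom A (Pmod A i) X \<subseteq> comp_image A (Pmod A) ids X i))"
  proof (intro allI impI)
    fix X m assume X: "coherent_mod A X"
    have MX: "is_module A X" using cm_mod[OF X] .
    obtain js g where g: "surj_hom A (Pfam A js) X g" using X by (auto simp: coherent_mod_def fin_gen_def)
    define G0 where "G0 = (\<lambda>t. (js!t, g (js!t) (unitv A js t))) ` {..<length js}"
    have finG0: "finite G0" unfolding G0_def by simp
    have G0V: "\<And>j y. (j,y) \<in> G0 \<Longrightarrow> y \<in> Msp X j" using GEN_valid[OF ZA g] unfolding G0_def by blast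
    have "\<forall>j. \<exists>H. \<exists>n. finite H \<and> (\<forall>(d,b)\<in>H. d \<le> m \<and> b \<in> Asp A d j) \<and>
       (\<forall>i<n. Asp A i j \<subseteq> gspan A (\<lambda>i l m a. amul A i l j m a) H i)"
      using KL[OF ZA assms] by blast
    then obtain Hf where "\<forall>j. \<exists>n. finite (Hf j) \<and> (\<forall>(d,b)\<in>Hf j. d \<le> m \<and> b \<in> Asp A d j) \<and>
       (\<forall>i<n. Asp A i j \<subseteq> gspan A (\<lambda>i l m a. amul A i l j m a) (Hf j) i)"
      by (rule choice[THEN exE])
    then obtain nf where HF: "\<forall>j. finite (Hf j) \<and> (\<forall>(d,b)\<in>Hf j. d \<le> m \<and> b \<in> Asp A d j) \<and>
       (\<forall>i<nf j. Asp A i j \<subseteq> gspan A (\<lambda>i l m a. amul A i l j m a) (Hf j) i)"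
      by (rule choice[THEN exE])
    define n where "n = Min (insert 0 ((\<lambda>p. nf (fst p)) ` G0))"
    have nle: "n \<le> nf j" if "(j,y) \<in> G0" for j y
    proof -
      have "nf j \<in> insert 0 ((\<lambda>p. nf (fst p)) ` G0)" using that by force
      then show ?thesis unfolding n_def using finG0 by (intro Min_le) auto
    qed
    define T where "T = {(d, mact X d j y b) | d b j y. (j,y) \<in> G0 \<and> (d,b) \<in> Hf j}"
    have finT: "finite T" unfolding T_def by (rule fin_T[OF ZA finG0]) (use HF in blast)
    obtain L where L: "set L = T" using finite_list[OF finT] by blast
    have LV: "\<And>d y. (d,y) \<in> set L \<Longrightarrow> y \<in> Msp X d"
    proof -
      fix d y' assume "(d,y') \<in> set L"
      then obtain b j y where e: "y' = mact X d j y b" "(j,y) \<in> G0" "(d,b) \<in> Hf j"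
        unfolding L T_def by blast
      have "b \<in> Asp A d j" using HF e(3) by blast
      then show "y' \<in> Msp X d" using M_in[OF ZA MX G0V[OF e(2)]] e(1) by simp
    qed
    show "\<exists>ids. (\<forall>t\<in>set ids. t \<le> m) \<and> (\<exists>n. \<forall>i<n. Hom A (Pmod A i) X \<subseteq> comp_image A (Pmod A) ids X i)"
    proof (intro exI conjI)
      show "\<forall>t\<in>set (map fst L). t \<le> m"
      proof
        fix t assume "t \<in> set (map fst L)"
        then obtain y where "(t,y) \<in> T" using L by auto
        then obtain j b where "(t,b) \<in> Hf j" unfolding T_def by blast
        then show "t \<le> m" using HF by blast
      qed
      show "\<forall>i<n. Hom A (Pmod A i) X \<subseteq> comp_image A (Pmod A) (map fst L) X i"
      proof (intro allI impI subsetI)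
        fix i phi assume i: "i < n" and phi: "phi \<in> Hom A (Pmod A i) X"
        define x where "x = phi i (aone A i)"
        have xX: "x \<in> Msp X i" using phi one_in[OF ZA] hom_in unfolding x_def by (fastforce simp: Hom_def)
        have x0: "x \<in> gspan A (mact X) G0 i" unfolding G0_def by (rule GEN[OF ZA MX g xX])
        have HV: "\<And>j d b. (d,b) \<in> Hf j \<Longrightarrow> b \<in> Asp A d j" using HF by blast
        have HS: "Asp A i j \<subseteq> gspan A (\<lambda>i l m a. amul A i l j m a) (Hf j) i" if "(j,y) \<in> G0" for j y
        proof -
          have "i < nf j" using nle[OF that] i by simp
          then show ?thesis using HF by blast
        qed
        have x1: "x \<in> gspan A (mact X) T i" unfolding T_def by (rule span_trans[OF ZA MX G0V HV HS x0])
        have x2: "x \<in> gspan A (mact X) (set L) i" using x1 L by simp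
        have "yon A X i x \<in> comp_image A (Pmod A) (map fst L) X i" by (rule yon_ci[OF ZA MX LV PM x2])
        then show "phi \<in> comp_image A (Pmod A) (map fst L) X i" using yon_eq[OF ZA MX phi] x_def by simp
      qed
    qed
  qed
  show ?thesis unfolding coherent_seq_def using proj coh by blast
qed


end
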